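(* Let $X$ and $Y$ be slices that are not jointly spacelike (i.e. $X\cup Y$ is not spacelike). Then the presheaf $(X\wedge Y)(-):\mathsf{Slice}^{op}\to\mathsf{Set}$ is not representable.
   Context: Fix a connected, time-orientable Lorentzian manifold $\mathcal{M}$ with a fixed time-orientation (no further causality assumptions). A causal curve is an equivalence class, up to monotone reparametrisation, of smooth regular paths $\mu:\iota\to\mathcal{M}$ ($\iota\subseteq\mathbb{R}$ an interval) whose tangent is everywhere timelike or null; it is future-directed if the tangent is everywhere future-directed. Write $x\prec y$ if $x=y$ or there is a future-directed causal curve from $x$ to $y$. A region $A\subseteq\mathcal{M}$ is spacelike if no two distinct points $x,y\in A$ satisfy $x\prec y$. A slice is a closed spacelike subset of $\mathcal{M}$; slices $X,Y$ are jointly spacelike if $X\cup Y$ is spacelike. For regions $A,B$, $\mathcal{C}[A,B]$ is the set of future-directed causal curves passing through $A$ and then $B$: for a representative path $\mu:\iota\to\mathcal{M}$, there exists $q\in\iota$ with $\mu(q)\in B$, and for every such $q$ there exists $p\le q$ with $\mu(p)\in A$. The category $\mathsf{Slice}$ has slices as objects, $\mathsf{Slice}(X,Y)=\mathcal{P}(\mathcal{C}[X,Y])$ (the powerset), composition $T\circ S:=T\cap S$, identities $1_X=\mathcal{C}[X,X]$. For slices $X,Y$, $(X\wedge Y)(-)$ is the presheaf with $(X\wedge Y)(Z):=\mathcal{P}(\mathcal{C}[Z,X]\cap\mathcal{C}[Z,Y])$ and $(X\wedge Y)(U:Z'\to Z):C\mapsto C\cap U$. *)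

theory Defs
  imports "HOL-Analysis.Analysis"
begin

definition pdiff :: "(real^'n \<Rightarrow> 'b::real_normed_vector) \<Rightarrow> 'n \<Rightarrow> real^'n \<Rightarrow> 'b" where
  "pdiff f i x = vector_derivative (\<lambda>t. f (x + t *\<^sub>R axis i 1)) (at 0)"

primrec pds :: "'n list \<Rightarrow> (real^'n \<Rightarrow> 'b::real_normed_vector) \<Rightarrow> real^'n \<Rightarrow> 'b" where
  "pds [] f = f"
| "pds (i # is) f = pdiff (pds is f) i"

definition cinf_on :: "(real^'n) set \<Rightarrow> (real^'n \<Rightarrow> 'b::real_normed_vector) \<Rightarrow> bool" where
  "cinf_on U f \<longleftrightarrow> open U \<and>
     (\<forall>is. continuous_on U (pds is f) \<and>
        (\<forall>i. \<forall>x\<in>U. ((\<lambda>t. pds is f (x + t *\<^sub>R axis i 1)) has_vector_derivative pds (i # is) f x) (at 0)))"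

primrec pathder :: "nat \<Rightarrow> real set \<Rightarrow> (real \<Rightarrow> 'a::real_normed_vector) \<Rightarrow> real \<Rightarrow> 'a" where
  "pathder 0 S g = g"
| "pathder (Suc k) S g = (\<lambda>t. vector_derivative (pathder k S g) (at t within S))"

definition path_cinf :: "real set \<Rightarrow> (real \<Rightarrow> 'a::real_normed_vector) \<Rightarrow> bool" where
  "path_cinf S g \<longleftrightarrow>
     (\<forall>k. \<forall>t\<in>S. (pathder k S g has_vector_derivative pathder (Suc k) S g t) (at t within S))"

text \<open>A chart is a pair (U, phi) of an open domain U and a map phi into R^n.
  The metric and the time-orientation field are given in the coordinates of each chart.\<close>

type_synonym ('m, 'n) chart = "'m set \<times> ('m \<Rightarrow> real^'n)"

record ('m, 'n) spacetime =
  atlas :: "('m, 'n) chart set"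
  metric :: "('m, 'n) chart \<Rightarrow> 'm \<Rightarrow> real^'n \<Rightarrow> real^'n \<Rightarrow> real"
  torient :: "('m, 'n) chart \<Rightarrow> 'm \<Rightarrow> real^'n"

definition lorentz_form :: "(real^'n \<Rightarrow> real^'n \<Rightarrow> real) \<Rightarrow> bool" where
  "lorentz_form B \<longleftrightarrow> bilinear B \<and> (\<forall>v w. B v w = B w v) \<and>
     (\<exists>e :: 'n \<Rightarrow> real^'n. \<exists>i0.
        \<forall>i j. B (e i) (e j) = (if i \<noteq> j then 0 else if i = i0 then -1 else 1))"

definition transition :: "('m, 'n) chart \<Rightarrow> ('m, 'n) chart \<Rightarrow> real^'n \<Rightarrow> real^'n" where
  "transition c1 c2 = snd c2 \<circ> inv_into (fst c1) (snd c1)"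

definition is_spacetime :: "('m::topological_space, 'n::finite) spacetime \<Rightarrow> bool" where
  "is_spacetime ST \<longleftrightarrow>
     (\<forall>(U, \<phi>)\<in>atlas ST. open U \<and> open (\<phi> ` U) \<and> homeomorphism U (\<phi> ` U) \<phi> (inv_into U \<phi>)) \<and>
     \<Union>(fst ` atlas ST) = UNIV \<and>
     (\<forall>c1\<in>atlas ST. \<forall>c2\<in>atlas ST.
        cinf_on (snd c1 ` (fst c1 \<inter> fst c2)) (transition c1 c2)) \<and>
     (\<forall>(U, \<phi>)\<in>atlas ST.
        (\<forall>i j. cinf_on (\<phi> ` U) (\<lambda>x. metric ST (U, \<phi>) (inv_into U \<phi> x) (axis i 1) (axis j 1))) \<and>
        continuous_on (\<phi> ` U) (\<lambda>x. torient ST (U, \<phi>) (inv_into U \<phi> x))) \<and>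
     (\<forall>c\<in>atlas ST. \<forall>p\<in>fst c.
        lorentz_form (metric ST c p) \<and> metric ST c p (torient ST c p) (torient ST c p) < 0) \<and>
     (\<forall>c1\<in>atlas ST. \<forall>c2\<in>atlas ST. \<forall>p\<in>fst c1 \<inter> fst c2.
        (let D = frechet_derivative (transition c1 c2) (at (snd c1 p)) in
          (\<forall>v w. metric ST c2 p (D v) (D w) = metric ST c1 p v w) \<and>
          torient ST c2 p = D (torient ST c1 p)))"

definition fd_causal_path :: "('m::topological_space, 'n::finite) spacetime \<Rightarrow> real set \<Rightarrow> (real \<Rightarrow> 'm) \<Rightarrow> bool" where
  "fd_causal_path ST I \<mu> \<longleftrightarrow>
     is_interval I \<and> (\<exists>a\<in>I. \<exists>b\<in>I. a < b) \<and> continuous_on I \<mu> \<and>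
     (\<forall>(U, \<phi>)\<in>atlas ST.
        path_cinf (I \<inter> \<mu> -` U) (\<phi> \<circ> \<mu>) \<and>
        (\<forall>t\<in>I. \<mu> t \<in> U \<longrightarrow>
           (let v = vector_derivative (\<phi> \<circ> \<mu>) (at t within I) in
              v \<noteq> 0 \<and> metric ST (U, \<phi>) (\<mu> t) v v \<le> 0 \<and>
              metric ST (U, \<phi>) (\<mu> t) v (torient ST (U, \<phi>) (\<mu> t)) < 0)))"

definition reparam :: "real set \<times> (real \<Rightarrow> 'm) \<Rightarrow> real set \<times> (real \<Rightarrow> 'm) \<Rightarrow> bool" where
  "reparam r s \<longleftrightarrow> (\<exists>h. bij_betw h (fst r) (fst s) \<and> mono_on (fst r) h \<and>
                         (\<forall>t\<in>fst r. snd r t = snd s (h t)))"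

definition curve_class :: "('m::topological_space, 'n::finite) spacetime \<Rightarrow> real set \<Rightarrow> (real \<Rightarrow> 'm) \<Rightarrow> (real set \<times> (real \<Rightarrow> 'm)) set" where
  "curve_class ST I \<mu> = {(J, \<nu>). fd_causal_path ST J \<nu> \<and> reparam (J, \<nu>) (I, \<mu>)}"

definition fd_causal_curves :: "('m::topological_space, 'n::finite) spacetime \<Rightarrow> (real set \<times> (real \<Rightarrow> 'm)) set set" where
  "fd_causal_curves ST = {curve_class ST I \<mu> | I \<mu>. fd_causal_path ST I \<mu>}"

definition causal_prec :: "('m::topological_space, 'n::finite) spacetime \<Rightarrow> 'm \<Rightarrow> 'm \<Rightarrow> bool" where
  "causal_prec ST x y \<longleftrightarrow> x = y \<or>
     (\<exists>\<gamma>\<in>fd_causal_curves ST. \<exists>(I, \<mu>)\<in>\<gamma>. \<exists>p\<in>I. \<exists>q\<in>I. p \<le> q \<and> \<mu> p = x \<and> \<mu> q = y)"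

definition spacelike :: "('m::topological_space, 'n::finite) spacetime \<Rightarrow> 'm set \<Rightarrow> bool" where
  "spacelike ST A \<longleftrightarrow> (\<forall>x\<in>A. \<forall>y\<in>A. x \<noteq> y \<longrightarrow> \<not> causal_prec ST x y)"

definition slice :: "('m::topological_space, 'n::finite) spacetime \<Rightarrow> 'm set \<Rightarrow> bool" where
  "slice ST X \<longleftrightarrow> closed X \<and> spacelike ST X"

definition jointly_spacelike :: "('m::topological_space, 'n::finite) spacetime \<Rightarrow> 'm set \<Rightarrow> 'm set \<Rightarrow> bool" where
  "jointly_spacelike ST X Y \<longleftrightarrow> spacelike ST (X \<union> Y)"

text \<open>C[A,B]: future-directed causal curves passing through A and then B.\<close>
definition CC :: "('m::topological_space, 'n::finite) spacetime \<Rightarrow> 'm set \<Rightarrow> 'm set \<Rightarrow> (real set \<times> (real \<Rightarrow> 'm)) set set" where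
  "CC ST A B = {\<gamma> \<in> fd_causal_curves ST. \<exists>(I, \<mu>)\<in>\<gamma>.
      (\<exists>q\<in>I. \<mu> q \<in> B) \<and> (\<forall>q\<in>I. \<mu> q \<in> B \<longrightarrow> (\<exists>p\<in>I. p \<le> q \<and> \<mu> p \<in> A))}"

definition slice_hom :: "('m::topological_space, 'n::finite) spacetime \<Rightarrow> 'm set \<Rightarrow> 'm set \<Rightarrow> (real set \<times> (real \<Rightarrow> 'm)) set set set" where
  "slice_hom ST X Y = Pow (CC ST X Y)"

definition slice_comp :: "'c set \<Rightarrow> 'c set \<Rightarrow> 'c set" where
  "slice_comp T S = T \<inter> S"

definition slice_id :: "('m::topological_space, 'n::finite) spacetime \<Rightarrow> 'm set \<Rightarrow> (real set \<times> (real \<Rightarrow> 'm)) set set" where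
  "slice_id ST X = CC ST X X"

definition wedge_obj :: "('m::topological_space, 'n::finite) spacetime \<Rightarrow> 'm set \<Rightarrow> 'm set \<Rightarrow> 'm set \<Rightarrow> (real set \<times> (real \<Rightarrow> 'm)) set set set" where
  "wedge_obj ST X Y Z = Pow (CC ST Z X \<inter> CC ST Z Y)"

text \<open>Action of U : Z' -> Z, sending (X /\ Y)(Z) to (X /\ Y)(Z').\<close>
definition wedge_map :: "'c set \<Rightarrow> 'c set \<Rightarrow> 'c set" where
  "wedge_map U C = C \<inter> U"

text \<open>A presheaf on Slice (object part F, action Fm Z' Z U : F Z -> F Z' for U : Z' -> Z)
  is representable iff it is naturally isomorphic to Slice(-, W) for some slice W.\<close>
definition slice_representable ::
  "('m::topological_space, 'n::finite) spacetime \<Rightarrow> ('m set \<Rightarrow> 'x set) \<Rightarrow>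
   ('m set \<Rightarrow> 'm set \<Rightarrow> (real set \<times> (real \<Rightarrow> 'm)) set set \<Rightarrow> 'x \<Rightarrow> 'x) \<Rightarrow> bool" where
  "slice_representable ST F Fm \<longleftrightarrow>
     (\<exists>W. slice ST W \<and>
        (\<exists>\<alpha>. (\<forall>Z. slice ST Z \<longrightarrow> bij_betw (\<alpha> Z) (slice_hom ST Z W) (F Z)) \<and>
              (\<forall>Z Z'. slice ST Z \<longrightarrow> slice ST Z' \<longrightarrow>
                 (\<forall>U\<in>slice_hom ST Z' Z. \<forall>S\<in>slice_hom ST Z W.
                    \<alpha> Z' (slice_comp S U) = Fm Z' Z U (\<alpha> Z S)))))"

end

theory Submission
  imports Defs
begin


lemma at_within_Int_open:
  assumes "open A" "t \<in> A"
  shows "at t within (S \<inter> A) = at t within S"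
  by (rule at_within_nhd[OF assms(2,1)]) auto

lemma restrict_path:
  assumes STs: "is_spacetime ST" and P: "fd_causal_path ST I \<mu>" and sub: "{c..d} \<subseteq> I" and cd: "c < d"
  shows "fd_causal_path ST {c..d} \<mu>"
proof -
  have cont: "continuous_on I \<mu>" using P unfolding fd_causal_path_def by auto
  have nb: "at t within {c..d} \<noteq> bot" if "t \<in> {c..d}" for t
    using that cd by (simp add: trivial_limit_within)
  have ch: "path_cinf ({c..d} \<inter> \<mu> -` U) (\<phi> \<circ> \<mu>) \<and>
        (\<forall>t\<in>{c..d}. \<mu> t \<in> U \<longrightarrow>
           (let v = vector_derivative (\<phi> \<circ> \<mu>) (at t within {c..d}) in
              v \<noteq> 0 \<and> metric ST (U, \<phi>) (\<mu> t) v v \<le> 0 \<and>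
              metric ST (U, \<phi>) (\<mu> t) v (torient ST (U, \<phi>) (\<mu> t)) < 0))"
    if UA: "(U, \<phi>) \<in> atlas ST" for U \<phi>
  proof -
    have openU: "open U" using STs UA unfolding is_spacetime_def by fast
    define g where "g = \<phi> \<circ> \<mu>"
    define S where "S = I \<inter> \<mu> -` U"
    define S' where "S' = {c..d} \<inter> \<mu> -` U"
    have pc: "path_cinf S g" and tan: "\<forall>t\<in>I. \<mu> t \<in> U \<longrightarrow>
           (let v = vector_derivative g (at t within I) in
              v \<noteq> 0 \<and> metric ST (U, \<phi>) (\<mu> t) v v \<le> 0 \<and>
              metric ST (U, \<phi>) (\<mu> t) v (torient ST (U, \<phi>) (\<mu> t)) < 0)"
      using P UA unfolding fd_causal_path_def S_def g_def by fastforce+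
    obtain A where A: "open A" "A \<inter> I = \<mu> -` U \<inter> I"
      using cont openU unfolding continuous_on_open_invariant by blast
    have SA: "S = I \<inter> A" using A unfolding S_def by blast
    have SA': "S' = {c..d} \<inter> A" using A sub unfolding S'_def by blast
    have S'S: "S' \<subseteq> S" using sub unfolding S_def S'_def by blast
    have atS: "at t within S = at t within I" if "t \<in> S" for t
      using that SA A(1) at_within_Int_open[of A t I] by auto
    have atS': "at t within S' = at t within {c..d}" if "t \<in> S'" for t
      using that SA' A(1) at_within_Int_open[of A t "{c..d}"] by auto
    have nb': "at t within S' \<noteq> bot" if "t \<in> S'" for t
      using nb[of t] atS'[OF that] that unfolding S'_def by auto
    have der: "\<And>t. t \<in> S \<Longrightarrow> (pathder k S g has_vector_derivative pathder (Suc k) S g t) (at t within S)" for k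
      using pc unfolding path_cinf_def by blast
    have eq: "\<forall>t\<in>S'. pathder k S' g t = pathder k S g t" for k
    proof (induction k)
      case 0 then show ?case by simp
    next
      case (Suc k)
      show ?case
      proof
        fix t assume t: "t \<in> S'"
        have "(pathder k S g has_vector_derivative pathder (Suc k) S g t) (at t within S')"
          using der[of t k] t S'S has_vector_derivative_within_subset by blast
        then have "(pathder k S' g has_vector_derivative pathder (Suc k) S g t) (at t within S')"
          by (rule has_vector_derivative_transform_within[where d=1]) (use t Suc in auto)
        then show "pathder (Suc k) S' g t = pathder (Suc k) S g t"
          using vector_derivative_within[OF nb'[OF t]] by simp
      qed
    qed
    have "path_cinf S' g"
      unfolding path_cinf_def
    proof (intro allI ballI)
      fix k t assume t: "t \<in> S'"
      have "(pathder k S g has_vector_derivative pathder (Suc k) S g t) (at t within S')"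
        using der[of t k] t S'S has_vector_derivative_within_subset by blast
      then have "(pathder k S' g has_vector_derivative pathder (Suc k) S g t) (at t within S')"
        by (rule has_vector_derivative_transform_within[where d=1]) (use t eq in auto)
      then show "(pathder k S' g has_vector_derivative pathder (Suc k) S' g t) (at t within S')"
        using eq t by metis
    qed
    moreover have "vector_derivative g (at t within {c..d}) = vector_derivative g (at t within I)"
      if t: "t \<in> {c..d}" "\<mu> t \<in> U" for t
    proof -
      have tS: "t \<in> S" and tS': "t \<in> S'" using t sub unfolding S_def S'_def by auto
      have "(g has_vector_derivative pathder 1 S g t) (at t within S)"
        using der[OF tS, of 0] by simp
      then have d1: "(g has_vector_derivative pathder 1 S g t) (at t within I)"
        using atS[OF tS] by simp
      have nbI: "at t within I \<noteq> bot"
        using nb[OF t(1)] sub by (metis at_le bot.extremum_uniqueI)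
      have d2: "(g has_vector_derivative pathder 1 S g t) (at t within {c..d})"
        using d1 sub has_vector_derivative_within_subset by blast
      show ?thesis using vector_derivative_within[OF nbI d1] vector_derivative_within[OF nb[OF t(1)] d2]
        by simp
    qed
    ultimately show ?thesis using tan sub unfolding S'_def g_def by auto
  qed
  have ex: "\<exists>a\<in>{c..d}. \<exists>b\<in>{c..d}. a < b" using cd by (intro bexI[of _ c] bexI[of _ d]) auto
  show ?thesis
    unfolding fd_causal_path_def
    using cont sub cd ch ex
    by (auto intro: continuous_on_subset is_interval_cc)
qed


lemma path_self:
  assumes "fd_causal_path ST I \<mu>"
  shows "(I, \<mu>) \<in> curve_class ST I \<mu>" "curve_class ST I \<mu> \<in> fd_causal_curves ST"
proof -
  show "(I, \<mu>) \<in> curve_class ST I \<mu>"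
    unfolding curve_class_def reparam_def using assms
    by (auto intro!: exI[of _ id] simp: mono_on_id)
  show "curve_class ST I \<mu> \<in> fd_causal_curves ST"
    unfolding fd_causal_curves_def using assms by blast
qed

lemma path_rep:
  assumes "(J, \<nu>) \<in> curve_class ST I \<mu>"
  shows "fd_causal_path ST J \<nu>"
    "\<exists>h. bij_betw h J I \<and> mono_on J h \<and> (\<forall>t\<in>J. \<nu> t = \<mu> (h t))"
  using assms unfolding curve_class_def reparam_def by auto

lemma along:
  assumes "spacelike ST A" "fd_causal_path ST I \<mu>" "s \<in> I" "t \<in> I" "s \<le> t"
    "\<mu> s \<in> A" "\<mu> t \<in> A"
  shows "\<mu> s = \<mu> t"
proof (rule ccontr)
  assume ne: "\<mu> s \<noteq> \<mu> t"
  have "causal_prec ST (\<mu> s) (\<mu> t)"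
    unfolding causal_prec_def using path_self[OF assms(2)] assms(3-5) by blast
  then show False using assms(1,6,7) ne unfolding spacelike_def by blast
qed

lemma CC_intro:
  assumes "fd_causal_path ST I \<mu>" "q \<in> I" "\<mu> q \<in> B"
    "\<And>q. q \<in> I \<Longrightarrow> \<mu> q \<in> B \<Longrightarrow> (\<exists>p\<in>I. p \<le> q \<and> \<mu> p \<in> A)"
  shows "curve_class ST I \<mu> \<in> CC ST A B"
proof -
  have "\<exists>(J, \<nu>)\<in>curve_class ST I \<mu>.
      (\<exists>q\<in>J. \<nu> q \<in> B) \<and> (\<forall>q\<in>J. \<nu> q \<in> B \<longrightarrow> (\<exists>p\<in>J. p \<le> q \<and> \<nu> p \<in> A))"
    using path_self(1)[OF assms(1)] assms(2,3,4) by blast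
  then show ?thesis unfolding CC_def using path_self(2)[OF assms(1)] by blast
qed

lemma CC_self:
  assumes "fd_causal_path ST I \<mu>" "q \<in> I" "\<mu> q \<in> B"
  shows "curve_class ST I \<mu> \<in> CC ST B B"
  by (rule CC_intro[OF assms]) auto


lemma CC_elim:
  assumes "G \<in> CC ST A B"
  obtains J \<nu> where "(J, \<nu>) \<in> G" "\<exists>q\<in>J. \<nu> q \<in> B"
    "\<forall>q\<in>J. \<nu> q \<in> B \<longrightarrow> (\<exists>p\<in>J. p \<le> q \<and> \<nu> p \<in> A)"
  using assms unfolding CC_def by auto

lemma cp_elim:
  assumes "causal_prec ST a b" "a \<noteq> b"
  obtains I \<mu> p q where "fd_causal_path ST I \<mu>" "p \<in> I" "q \<in> I" "p \<le> q" "\<mu> p = a" "\<mu> q = b"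
proof -
  obtain \<gamma> I \<mu> p q where g: "\<gamma> \<in> fd_causal_curves ST" "(I, \<mu>) \<in> \<gamma>" and
    pq: "p \<in> I" "q \<in> I" "p \<le> q" "\<mu> p = a" "\<mu> q = b"
    using assms unfolding causal_prec_def by blast
  obtain I0 \<mu>0 where "\<gamma> = curve_class ST I0 \<mu>0" using g(1) unfolding fd_causal_curves_def by blast
  then have "fd_causal_path ST I \<mu>" using g(2) path_rep(1) by blast
  then show ?thesis using that pq by blast
qed

lemma cp_intro:
  assumes "fd_causal_path ST I \<mu>" "p \<in> I" "q \<in> I" "p \<le> q"
  shows "causal_prec ST (\<mu> p) (\<mu> q)"
  unfolding causal_prec_def using path_self[OF assms(1)] assms(2-4) by blast



lemma geo:
  assumes STs: "is_spacetime ST" and sX: "spacelike ST X" and sY: "slice ST Y"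
    and spW: "spacelike ST W"
    and H1: "CC ST X X \<inter> CC ST X Y \<subseteq> CC ST X W"
    and H2: "CC ST W W \<subseteq> CC ST W X" and H3: "CC ST W W \<subseteq> CC ST W Y"
    and aX: "a \<in> X" and bY: "b \<in> Y" and ab: "a \<noteq> b" and cp: "causal_prec ST a b"
  shows False
proof -
  obtain I \<mu> p q where P: "fd_causal_path ST I \<mu>" and
    pq: "p \<in> I" "q \<in> I" "p \<le> q" "\<mu> p = a" "\<mu> q = b"
    using cp_elim[OF cp ab] by blast
  have spY: "spacelike ST Y" and clY: "closed Y" using sY unfolding slice_def by auto
  have aY: "a \<notin> Y"
  proof
    assume "a \<in> Y"
    then have "\<mu> p = \<mu> q" using along[OF spY P pq(1,2,3)] pq bY by simp
    then show False using pq ab by simp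
  qed
  have pq': "p < q" using pq ab by (metis order_less_le)
  have intI: "is_interval I" using P unfolding fd_causal_path_def by simp
  have sub: "{p..q} \<subseteq> I" 
  proof
    fix t assume "t \<in> {p..q}"
    then show "t \<in> I" using mem_is_interval_1_I[OF intI pq(1,2)] by auto
  qed
  have cont: "continuous_on {p..q} \<mu>"
    using P sub unfolding fd_causal_path_def by (meson continuous_on_subset)
  define T where "T = {p..q} \<inter> \<mu> -` Y"
  have clT: "closed T" unfolding T_def using continuous_closed_preimage[OF cont _ clY] by simp
  have qT: "q \<in> T" unfolding T_def using pq bY by auto
  have bddT: "bdd_below T" unfolding T_def by (auto intro: bdd_belowI[of _ p])
  define q0 where "q0 = Inf T"
  have q0T: "q0 \<in> T" unfolding q0_def using closed_contains_Inf[OF _ bddT clT] qT by blast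
  have q0le: "q0 \<le> t" if "t \<in> T" for t unfolding q0_def using cInf_lower[OF that bddT] .
  have q0r: "q0 \<in> {p..q}" "\<mu> q0 \<in> Y" using q0T unfolding T_def by auto
  have pq0: "p < q0" using q0r aY pq(4) by (metis atLeastAtMost_iff order_less_le)
  have hitY: "t = q0" if "t \<in> {p..q0}" "\<mu> t \<in> Y" for t
    using that q0le[of t] q0r unfolding T_def by auto
  have sub0: "{p..q0} \<subseteq> I" using sub q0r by auto
  have P0: "fd_causal_path ST {p..q0} \<mu>" by (rule restrict_path[OF STs P sub0 pq0])
  define G where "G = curve_class ST {p..q0} \<mu>"
  have pin: "p \<in> {p..q0}" using pq0 by auto
  have q0in: "q0 \<in> {p..q0}" using pq0 by auto
  have "G \<in> CC ST X X" unfolding G_def using CC_self[OF P0 pin] pq(4) aX by simp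
  moreover have "G \<in> CC ST X Y" unfolding G_def
    by (rule CC_intro[OF P0 q0in q0r(2)]) (use pin pq(4) aX hitY in auto)
  ultimately have "G \<in> CC ST X W" using H1 by blast
  then obtain J \<nu> where J: "(J, \<nu>) \<in> G" "\<exists>s\<in>J. \<nu> s \<in> W"
    by (rule CC_elim)
  obtain s where s: "s \<in> J" "\<nu> s \<in> W" using J(2) by blast
  obtain h where h: "bij_betw h J {p..q0}" "mono_on J h" "\<forall>t\<in>J. \<nu> t = \<mu> (h t)"
    using path_rep(2)[OF J(1)[unfolded G_def]] by blast
  define t where "t = h s"
  have t: "t \<in> {p..q0}" "\<mu> t \<in> W" using h s unfolding t_def bij_betw_def by auto
  show False
  proof (cases "t < q0")
    case True
    define m where "m = (t + q0) / 2"
    have pm: "p < m" and mq: "m < q0" using True t unfolding m_def by auto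
    have subm: "{p..m} \<subseteq> I" using sub0 mq by auto
    have Pm: "fd_causal_path ST {p..m} \<mu>" by (rule restrict_path[OF STs P subm pm])
    define G' where "G' = curve_class ST {p..m} \<mu>"
    have tm: "t \<in> {p..m}" using t True unfolding m_def by auto
    have "G' \<in> CC ST W W" unfolding G'_def using CC_self[OF Pm tm t(2)] .
    then have "G' \<in> CC ST W Y" using H3 by blast
    then obtain J' \<nu>' where J': "(J', \<nu>') \<in> G'" "\<exists>s'\<in>J'. \<nu>' s' \<in> Y"
      by (rule CC_elim)
    obtain s' where s': "s' \<in> J'" "\<nu>' s' \<in> Y" using J'(2) by blast
    obtain h' where h': "bij_betw h' J' {p..m}" "mono_on J' h'" "\<forall>t\<in>J'. \<nu>' t = \<mu> (h' t)"
      using path_rep(2)[OF J'(1)[unfolded G'_def]] by blast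
    have "h' s' \<in> {p..m}" "\<mu> (h' s') \<in> Y" using h' s' unfolding bij_betw_def by auto
    then show False using hitY[of "h' s'"] mq by auto
  next
    case False
    then have tq: "t = q0" using t by auto
    have "G \<in> CC ST W W" unfolding G_def using CC_self[OF P0 t] .
    then have "G \<in> CC ST W X" using H2 by blast
    then obtain K \<kappa> where K: "(K, \<kappa>) \<in> G"
      "\<forall>r\<in>K. \<kappa> r \<in> X \<longrightarrow> (\<exists>p'\<in>K. p' \<le> r \<and> \<kappa> p' \<in> W)"
      by (rule CC_elim)
    obtain k where k: "bij_betw k K {p..q0}" "mono_on K k" "\<forall>t\<in>K. \<kappa> t = \<mu> (k t)"
      using path_rep(2)[OF K(1)[unfolded G_def]] by blast
    have "p \<in> k ` K" using k(1) pin unfolding bij_betw_def by simp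
    then obtain r where r: "r \<in> K" "k r = p" by blast
    have "\<kappa> r \<in> X" using k(3) r pq(4) aX by auto
    then obtain p' where p': "p' \<in> K" "p' \<le> r" "\<kappa> p' \<in> W" using K(2) r by blast
    have "k p' \<le> p" using mono_onD[OF k(2) p'(1) r(1) p'(2)] r by simp
    moreover have "k p' \<in> {p..q0}" using k(1) p'(1) unfolding bij_betw_def by auto
    ultimately have "k p' = p" by auto
    then have aW: "a \<in> W" using p' k(3) pq(4) by auto
    have cp2: "causal_prec ST a (\<mu> q0)"
      using cp_intro[OF P0 pin q0in] pq0 pq(4) by simp
    have "a \<noteq> \<mu> q0" using aY q0r by auto
    then show False using spW aW t tq cp2 unfolding spacelike_def by blast
  qed
qed


lemma CC_sub_self: "CC ST Z W \<subseteq> CC ST W W"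
proof
  fix G assume "G \<in> CC ST Z W"
  then obtain J \<nu> where J: "(J, \<nu>) \<in> G" "\<exists>q\<in>J. \<nu> q \<in> W" by (rule CC_elim)
  have "G \<in> fd_causal_curves ST" using \<open>G \<in> CC ST Z W\<close> unfolding CC_def by simp
  moreover have "\<exists>(I, \<mu>)\<in>G. (\<exists>q\<in>I. \<mu> q \<in> W) \<and> (\<forall>q\<in>I. \<mu> q \<in> W \<longrightarrow> (\<exists>p\<in>I. p \<le> q \<and> \<mu> p \<in> W))"
    using J by blast
  ultimately show "G \<in> CC ST W W" unfolding CC_def by simp
qed

theorem mainTheorem10:
  fixes ST :: "('m::{t2_space, second_countable_topology}, 'n::finite) spacetime"
    and X Y :: "'m set"
  assumes "is_spacetime ST"
    and "connected (UNIV :: 'm set)"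
    and "slice ST X" and "slice ST Y"
    and "\<not> jointly_spacelike ST X Y"
  shows "\<not> slice_representable ST (wedge_obj ST X Y) (\<lambda>Z' Z U C. wedge_map U C)"
proof
  assume "slice_representable ST (wedge_obj ST X Y) (\<lambda>Z' Z U C. wedge_map U C)"
  then obtain W \<alpha> where sW: "slice ST W"
    and bij: "\<And>Z. slice ST Z \<Longrightarrow> bij_betw (\<alpha> Z) (slice_hom ST Z W) (wedge_obj ST X Y Z)"
    and nat: "\<And>Z Z' U S. slice ST Z \<Longrightarrow> slice ST Z' \<Longrightarrow> U \<in> slice_hom ST Z' Z \<Longrightarrow> S \<in> slice_hom ST Z W \<Longrightarrow>
                 \<alpha> Z' (slice_comp S U) = wedge_map U (\<alpha> Z S)"
    unfolding slice_representable_def by blast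
  define E where "E = \<alpha> W (CC ST W W)"
  have form: "\<alpha> Z S = E \<inter> S" if Z: "slice ST Z" and S: "S \<subseteq> CC ST Z W" for Z S
  proof -
    have "\<alpha> Z (slice_comp (CC ST W W) S) = wedge_map S (\<alpha> W (CC ST W W))"
      by (rule nat[OF sW Z]) (use S in \<open>auto simp: slice_hom_def slice_id_def\<close>)
    moreover have "slice_comp (CC ST W W) S = S"
      using S CC_sub_self[of ST Z W] unfolding slice_comp_def by blast
    ultimately show ?thesis unfolding E_def wedge_map_def by auto
  qed
  have key: "CC ST Z W = CC ST Z X \<inter> CC ST Z Y" if Z: "slice ST Z" for Z
  proof
    have b: "bij_betw (\<alpha> Z) (Pow (CC ST Z W)) (Pow (CC ST Z X \<inter> CC ST Z Y))"
      using bij[OF Z] unfolding slice_hom_def wedge_obj_def .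
    show "CC ST Z W \<subseteq> CC ST Z X \<inter> CC ST Z Y"
    proof
      fix c assume c: "c \<in> CC ST Z W"
      have e: "\<alpha> Z {} = {}" using form[OF Z, of "{}"] by simp
      have s: "\<alpha> Z {c} = E \<inter> {c}" using form[OF Z, of "{c}"] c by simp
      have "\<alpha> Z {c} \<noteq> \<alpha> Z {}"
        using b c unfolding bij_betw_def inj_on_def by blast
      then have "\<alpha> Z {c} = {c}" using s e by auto
      moreover have "\<alpha> Z {c} \<in> Pow (CC ST Z X \<inter> CC ST Z Y)"
        using b c unfolding bij_betw_def by blast
      ultimately show "c \<in> CC ST Z X \<inter> CC ST Z Y" by auto
    qed
    show "CC ST Z X \<inter> CC ST Z Y \<subseteq> CC ST Z W"
    proof
      fix c assume c: "c \<in> CC ST Z X \<inter> CC ST Z Y"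
      then have "{c} \<in> \<alpha> Z ` Pow (CC ST Z W)" using b unfolding bij_betw_def by auto
      then obtain S where S: "S \<subseteq> CC ST Z W" "\<alpha> Z S = {c}" by auto
      then show "c \<in> CC ST Z W" using form[OF Z S(1)] by auto
    qed
  qed
  have sX: "spacelike ST X" and sY: "spacelike ST Y" and spW: "spacelike ST W"
    using assms(3,4) sW unfolding slice_def by auto
  obtain a b where ab: "a \<in> X \<union> Y" "b \<in> X \<union> Y" "a \<noteq> b" "causal_prec ST a b"
    using assms(5) unfolding jointly_spacelike_def spacelike_def by blast
  have kX: "CC ST X W = CC ST X X \<inter> CC ST X Y" using key[OF assms(3)] .
  have kY: "CC ST Y W = CC ST Y X \<inter> CC ST Y Y" using key[OF assms(4)] .
  have kW: "CC ST W W = CC ST W X \<inter> CC ST W Y" using key[OF sW] .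
  show False
  proof (cases "a \<in> X")
    case aX: True
    show False
    proof (cases "b \<in> X")
      case True then show False using sX aX ab unfolding spacelike_def by blast
    next
      case False
      then have "b \<in> Y" using ab by blast
      then have bY: "b \<in> Y" .
      have H1: "CC ST X X \<inter> CC ST X Y \<subseteq> CC ST X W" using kX by blast
      have H2: "CC ST W W \<subseteq> CC ST W X" "CC ST W W \<subseteq> CC ST W Y" using kW by blast+
      show False by (rule geo[OF assms(1) sX assms(4) spW H1 H2 aX bY ab(3,4)])
    qed
  next
    case aX: False
    then have aY: "a \<in> Y" using ab by blast
    show False
    proof (cases "b \<in> Y")
      case True then show False using sY aY ab unfolding spacelike_def by blast
    next
      case False
      then have "b \<in> X" using ab by blast
      then have bX: "b \<in> X" .
      have H1: "CC ST Y Y \<inter> CC ST Y X \<subseteq> CC ST Y W" using kY by blast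
      have H2: "CC ST W W \<subseteq> CC ST W Y" "CC ST W W \<subseteq> CC ST W X" using kW by blast+
      show False by (rule geo[OF assms(1) sY assms(3) spW H1 H2 aY bX ab(3,4)])
    qed
  qed
qed

end
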